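(* Let $(f_n):\underline G=(G_n,p_n)\to\underline H=(H_n,q_n)$ be a level morphism of inverse sequences of groups such that the induced homomorphism $\tilde f:\varprojlim\underline G\to\varprojlim\underline H$, $\tilde f((g_n))=(f_n(g_n))$, is surjective. If $\underline H$ is Mittag-Leffler, then the morphism $\underline f:\underline G\to\underline H$ of \textbf{Tower-Grp} determined by $(f_n)$ is an epimorphism in \textbf{Tower-Grp}.
   Context: A level morphism $(f_n)$ consists of homomorphisms $f_n:G_n\to H_n$ with $f_n\circ p_n=q_n\circ f_{n+1}$ for all $n$. $q_{nm}=q_n\circ\cdots\circ q_{m-1}$; $\underline H$ is Mittag-Leffler if for every $n_0$ there is $n_1>n_0$ with $q_{n_0n}(H_n)=q_{n_0n_1}(H_{n_1})$ for all $n>n_1$. \textbf{Tower-Grp}: objects inverse sequences of groups; morphisms $(f_n,\Phi)$ with $\Phi:\mathbb{N}\to\mathbb{N}$, homomorphisms $f_n:G_{\Phi(n)}\to H_n$ such that for all $n'>n$ there is $m\ge\Phi(n),\Phi(n')$ with $f_n\circ p_{\Phi(n)m}=q_{nn'}\circ f_{n'}\circ p_{\Phi(n')m}$, modulo: $(f_n,\Phi)\sim(g_n,\Psi)$ if every $n$ admits $m\ge\Phi(n),\Psi(n)$ with $f_n\circ p_{\Phi(n)m}=g_n\circ p_{\Psi(n)m}$. An epimorphism is a morphism $u$ with $a\circ u=b\circ u\Rightarrow a=b$. *)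

theory Defs
  imports "HOL-Algebra.Group"
begin

definition inverse_seq :: "(nat \<Rightarrow> 'a monoid) \<Rightarrow> (nat \<Rightarrow> 'a \<Rightarrow> 'a) \<Rightarrow> bool" where
  "inverse_seq G p \<longleftrightarrow> (\<forall>n. group (G n)) \<and> (\<forall>n. p n \<in> hom (G (Suc n)) (G n))"

fun bond_aux :: "(nat \<Rightarrow> 'a \<Rightarrow> 'a) \<Rightarrow> nat \<Rightarrow> nat \<Rightarrow> 'a \<Rightarrow> 'a" where
  "bond_aux p n 0 = id"
| "bond_aux p n (Suc k) = bond_aux p n k \<circ> p (n + k)"

definition bond :: "(nat \<Rightarrow> 'a \<Rightarrow> 'a) \<Rightarrow> nat \<Rightarrow> nat \<Rightarrow> 'a \<Rightarrow> 'a" where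
  "bond p n m = bond_aux p n (m - n)"

definition level_morphism ::
  "(nat \<Rightarrow> 'a monoid) \<Rightarrow> (nat \<Rightarrow> 'a \<Rightarrow> 'a) \<Rightarrow> (nat \<Rightarrow> 'b monoid) \<Rightarrow> (nat \<Rightarrow> 'b \<Rightarrow> 'b)
   \<Rightarrow> (nat \<Rightarrow> 'a \<Rightarrow> 'b) \<Rightarrow> bool" where
  "level_morphism G p H q f \<longleftrightarrow>
     (\<forall>n. f n \<in> hom (G n) (H n)) \<and>
     (\<forall>n. \<forall>x \<in> carrier (G (Suc n)). f n (p n x) = q n (f (Suc n) x))"

definition mittag_leffler :: "(nat \<Rightarrow> 'b monoid) \<Rightarrow> (nat \<Rightarrow> 'b \<Rightarrow> 'b) \<Rightarrow> bool" where
  "mittag_leffler H q \<longleftrightarrow>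
     (\<forall>n0. \<exists>n1 > n0. \<forall>n > n1. bond q n0 n ` carrier (H n) = bond q n0 n1 ` carrier (H n1))"

definition inv_lim :: "(nat \<Rightarrow> 'a monoid) \<Rightarrow> (nat \<Rightarrow> 'a \<Rightarrow> 'a) \<Rightarrow> (nat \<Rightarrow> 'a) set" where
  "inv_lim G p = {g. (\<forall>n. g n \<in> carrier (G n)) \<and> (\<forall>n. p n (g (Suc n)) = g n)}"

text \<open>Representatives (f_n, Phi) of morphisms of Tower-Grp.\<close>
definition tower_mor ::
  "(nat \<Rightarrow> 'a monoid) \<Rightarrow> (nat \<Rightarrow> 'a \<Rightarrow> 'a) \<Rightarrow> (nat \<Rightarrow> 'b monoid) \<Rightarrow> (nat \<Rightarrow> 'b \<Rightarrow> 'b)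
   \<Rightarrow> (nat \<Rightarrow> 'a \<Rightarrow> 'b) \<Rightarrow> (nat \<Rightarrow> nat) \<Rightarrow> bool" where
  "tower_mor G p H q f \<Phi> \<longleftrightarrow>
     (\<forall>n. f n \<in> hom (G (\<Phi> n)) (H n)) \<and>
     (\<forall>n n'. n < n' \<longrightarrow> (\<exists>m. m \<ge> \<Phi> n \<and> m \<ge> \<Phi> n' \<and>
        (\<forall>x \<in> carrier (G m). f n (bond p (\<Phi> n) m x) = bond q n n' (f n' (bond p (\<Phi> n') m x)))))"

definition tower_eq ::
  "(nat \<Rightarrow> 'a monoid) \<Rightarrow> (nat \<Rightarrow> 'a \<Rightarrow> 'a)
   \<Rightarrow> (nat \<Rightarrow> 'a \<Rightarrow> 'b) \<Rightarrow> (nat \<Rightarrow> nat) \<Rightarrow> (nat \<Rightarrow> 'a \<Rightarrow> 'b) \<Rightarrow> (nat \<Rightarrow> nat) \<Rightarrow> bool" where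
  "tower_eq G p f \<Phi> g \<Psi> \<longleftrightarrow>
     (\<forall>n. \<exists>m. m \<ge> \<Phi> n \<and> m \<ge> \<Psi> n \<and>
        (\<forall>x \<in> carrier (G m). f n (bond p (\<Phi> n) m x) = g n (bond p (\<Psi> n) m x)))"

definition tower_comp_fun :: "(nat \<Rightarrow> 'b \<Rightarrow> 'c) \<Rightarrow> (nat \<Rightarrow> nat) \<Rightarrow> (nat \<Rightarrow> 'a \<Rightarrow> 'b) \<Rightarrow> nat \<Rightarrow> 'a \<Rightarrow> 'c" where
  "tower_comp_fun a A f = (\<lambda>n. a n \<circ> f (A n))"

definition tower_comp_idx :: "(nat \<Rightarrow> nat) \<Rightarrow> (nat \<Rightarrow> nat) \<Rightarrow> nat \<Rightarrow> nat" where
  "tower_comp_idx A \<Phi> = \<Phi> \<circ> A"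

text \<open>Epimorphism in Tower-Grp, tested against all target towers K whose groups live on type 'c.
  (The theorem quantifies over all types 'c via a free type variable.)\<close>
definition tower_epi ::
  "'c itself \<Rightarrow> (nat \<Rightarrow> 'a monoid) \<Rightarrow> (nat \<Rightarrow> 'a \<Rightarrow> 'a) \<Rightarrow> (nat \<Rightarrow> 'b monoid) \<Rightarrow> (nat \<Rightarrow> 'b \<Rightarrow> 'b)
   \<Rightarrow> (nat \<Rightarrow> 'a \<Rightarrow> 'b) \<Rightarrow> (nat \<Rightarrow> nat) \<Rightarrow> bool" where
  "tower_epi (_::'c itself) G p H q f \<Phi> \<longleftrightarrow>
     (\<forall>(K :: nat \<Rightarrow> 'c monoid) r a A b B.
        inverse_seq K r \<longrightarrow> tower_mor H q K r a A \<longrightarrow> tower_mor H q K r b B \<longrightarrow>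
        tower_eq G p (tower_comp_fun a A f) (tower_comp_idx A \<Phi>)
                     (tower_comp_fun b B f) (tower_comp_idx B \<Phi>) \<longrightarrow>
        tower_eq H q a A b B)"

end

theory Submission
  imports Defs
begin

lemma bond_aux_add: "bond_aux p n (k + l) = bond_aux p n k \<circ> bond_aux p (n + k) l"
  by (induction l) (auto simp: add.assoc)

lemma bond_comp:
  assumes "a \<le> b" "b \<le> c"
  shows "bond q a c x = bond q a b (bond q b c x)"
proof -
  have "c - a = (b - a) + (c - b)" using assms by simp
  moreover have "a + (b - a) = b" using assms by simp
  ultimately show ?thesis unfolding bond_def by (metis bond_aux_add comp_apply)
qed

lemma bond_Suc: "bond q k (Suc k) = q k"
  unfolding bond_def by simp

lemma bond_refl: "bond q k k = id"
  unfolding bond_def by simp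

lemma bond_aux_carrier:
  assumes "inverse_seq H q"
  shows "x \<in> carrier (H (n + k)) \<Longrightarrow> bond_aux q n k x \<in> carrier (H n)"
proof (induction k arbitrary: x)
  case 0 then show ?case by simp
next
  case (Suc k)
  have "q (n + k) x \<in> carrier (H (n + k))"
    using assms Suc.prems unfolding inverse_seq_def hom_def by auto
  then show ?case using Suc.IH by simp
qed

lemma bond_carrier:
  assumes "inverse_seq H q" "n \<le> m" "x \<in> carrier (H m)"
  shows "bond q n m x \<in> carrier (H n)"
  using bond_aux_carrier[OF assms(1), where n=n and k="m - n" and x=x] assms(2,3) unfolding bond_def by simp

lemma level_bond_aux:
  assumes "inverse_seq G p" "level_morphism G p H q f"
  shows "x \<in> carrier (G (n + k)) \<Longrightarrow> f n (bond_aux p n k x) = bond_aux q n k (f (n + k) x)"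
proof (induction k arbitrary: x)
  case 0 then show ?case by simp
next
  case (Suc k)
  have "p (n + k) x \<in> carrier (G (n + k))"
    using assms Suc.prems unfolding inverse_seq_def hom_def by auto
  then have "f n (bond_aux p n k (p (n + k) x)) = bond_aux q n k (f (n + k) (p (n + k) x))"
    using Suc.IH by simp
  also have "f (n + k) (p (n + k) x) = q (n + k) (f (Suc (n + k)) x)"
    using assms(2) Suc.prems unfolding level_morphism_def by auto
  finally show ?case by simp
qed

lemma level_bond:
  assumes "inverse_seq G p" "level_morphism G p H q f" "n \<le> m" "x \<in> carrier (G m)"
  shows "f n (bond p n m x) = bond q n m (f m x)"
  using level_bond_aux[OF assms(1,2), where n=n and k="m - n" and x=x] assms(3,4) unfolding bond_def by simp

definition mlN :: "(nat \<Rightarrow> 'b monoid) \<Rightarrow> (nat \<Rightarrow> 'b \<Rightarrow> 'b) \<Rightarrow> nat \<Rightarrow> nat" where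
  "mlN H q k = (SOME n1. n1 > k \<and> (\<forall>n > n1. bond q k n ` carrier (H n) = bond q k n1 ` carrier (H n1)))"

lemma mlN:
  assumes "mittag_leffler H q"
  shows "mlN H q k > k" "\<And>n. n \<ge> mlN H q k \<Longrightarrow> bond q k n ` carrier (H n) = bond q k (mlN H q k) ` carrier (H (mlN H q k))"
proof -
  have ex: "\<exists>n1 > k. \<forall>n > n1. bond q k n ` carrier (H n) = bond q k n1 ` carrier (H n1)"
    using assms unfolding mittag_leffler_def by blast
  have *: "mlN H q k > k \<and> (\<forall>n > mlN H q k. bond q k n ` carrier (H n) = bond q k (mlN H q k) ` carrier (H (mlN H q k)))"
    unfolding mlN_def by (rule someI_ex) (use ex in blast)
  then show "mlN H q k > k" by blast
  fix n assume "n \<ge> mlN H q k"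
  then show "bond q k n ` carrier (H n) = bond q k (mlN H q k) ` carrier (H (mlN H q k))"
    using * by (cases "n = mlN H q k") auto
qed

lemma ml_lift:
  assumes HS: "inverse_seq H q" and MLa: "mittag_leffler H q"
    and y: "y \<in> bond q m (mlN H q m) ` carrier (H (mlN H q m))"
  shows "\<exists>h \<in> inv_lim H q. h m = y"
proof -
  define S where "S k = bond q k (mlN H q k) ` carrier (H (mlN H q k))" for k
  have S1: "S k \<subseteq> carrier (H k)" for k
    unfolding S_def using bond_carrier[OF HS] mlN(1)[OF MLa, of k] by fastforce
  have S3: "\<exists>w \<in> S (Suc k). q k w = z" if z: "z \<in> S k" for k z
  proof -
    define K where "K = mlN H q k + mlN H q (Suc k)"
    have K1: "K \<ge> mlN H q k" "K \<ge> mlN H q (Suc k)" unfolding K_def by auto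
    have K2: "Suc k \<le> K" using mlN(1)[OF MLa, of "Suc k"] K1 by simp
    from z have "z \<in> bond q k K ` carrier (H K)"
      unfolding S_def using mlN(2)[OF MLa K1(1)] by simp
    then obtain u where u: "u \<in> carrier (H K)" "z = bond q k K u" by blast
    have "bond q (Suc k) K u \<in> S (Suc k)"
      unfolding S_def using mlN(2)[OF MLa K1(2)] u(1) by blast
    moreover have "q k (bond q (Suc k) K u) = z"
      using bond_comp[of k "Suc k" K q u] K2 u(2) by (simp add: bond_Suc)
    ultimately show ?thesis by blast
  qed
  define t where "t = rec_nat y (\<lambda>j z. SOME w. w \<in> S (Suc (m + j)) \<and> q (m + j) w = z)"
  have t0: "t 0 = y" unfolding t_def by simp
  have tS: "t (Suc j) = (SOME w. w \<in> S (Suc (m + j)) \<and> q (m + j) w = t j)" for j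
    unfolding t_def by simp
  have tprop: "t j \<in> S (m + j) \<and> (\<forall>i. j = Suc i \<longrightarrow> q (m + i) (t j) = t i)" for j
  proof (induction j)
    case 0 then show ?case using y t0 unfolding S_def by simp
  next
    case (Suc j)
    then have "\<exists>w. w \<in> S (Suc (m + j)) \<and> q (m + j) w = t j" using S3 by blast
    then have "t (Suc j) \<in> S (Suc (m + j)) \<and> q (m + j) (t (Suc j)) = t j"
      unfolding tS by (rule someI_ex)
    then show ?case by simp
  qed
  have tC: "t j \<in> carrier (H (m + j))" for j using tprop S1 by blast
  have tq: "q (m + j) (t (Suc j)) = t j" for j using tprop by blast
  define h where "h k = bond q k (m + k) (t k)" for k
  have "h k \<in> carrier (H k)" for k unfolding h_def using bond_carrier[OF HS _ tC] by simp
  moreover have "q k (h (Suc k)) = h k" for k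
  proof -
    have "q k (h (Suc k)) = bond q k (Suc k) (bond q (Suc k) (m + Suc k) (t (Suc k)))"
      unfolding h_def bond_Suc by simp
    also have "\<dots> = bond q k (m + Suc k) (t (Suc k))"
      using bond_comp[of k "Suc k" "m + Suc k" q] by simp
    also have "\<dots> = bond q k (m + k) (bond q (m + k) (Suc (m + k)) (t (Suc k)))"
      using bond_comp[of k "m + k" "Suc (m + k)" q] by simp
    also have "\<dots> = h k" unfolding h_def bond_Suc tq by simp
    finally show ?thesis .
  qed
  ultimately have "h \<in> inv_lim H q" unfolding inv_lim_def by blast
  moreover have "bond q m (m + j) (t j) = y" for j
  proof (induction j)
    case 0 then show ?case by (simp add: bond_refl t0)
  next
    case (Suc j)
    have "bond q m (m + Suc j) (t (Suc j)) = bond q m (m + j) (bond q (m + j) (Suc (m + j)) (t (Suc j)))"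
      using bond_comp[of m "m + j" "Suc (m + j)" q] by simp
    also have "\<dots> = y" unfolding bond_Suc tq using Suc by simp
    finally show ?case .
  qed
  then have "h m = y" unfolding h_def by simp
  ultimately show ?thesis by blast
qed

theorem proposition8p14:
  fixes G :: "nat \<Rightarrow> 'a monoid" and p :: "nat \<Rightarrow> 'a \<Rightarrow> 'a"
    and H :: "nat \<Rightarrow> 'b monoid" and q :: "nat \<Rightarrow> 'b \<Rightarrow> 'b"
    and f :: "nat \<Rightarrow> 'a \<Rightarrow> 'b"
  assumes "inverse_seq G p" and "inverse_seq H q"
    and "level_morphism G p H q f"
    and "\<forall>h \<in> inv_lim H q. \<exists>g \<in> inv_lim G p. (\<lambda>n. f n (g n)) = h"
    and "mittag_leffler H q"
  shows "tower_epi TYPE('c) G p H q f id"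
  unfolding tower_epi_def
proof (intro allI impI)
  fix K :: "nat \<Rightarrow> 'c monoid" and r a A b B
  assume eq: "tower_eq G p (tower_comp_fun a A f) (tower_comp_idx A id)
                     (tower_comp_fun b B f) (tower_comp_idx B id)"
  show "tower_eq H q a A b B"
    unfolding tower_eq_def
  proof
    fix n
    obtain m where m: "m \<ge> A n" "m \<ge> B n"
      "\<forall>x \<in> carrier (G m). a n (f (A n) (bond p (A n) m x)) = b n (f (B n) (bond p (B n) m x))"
      using eq unfolding tower_eq_def tower_comp_fun_def tower_comp_idx_def by auto
    define n1 where "n1 = mlN H q m"
    have n1: "n1 > m" unfolding n1_def using mlN(1)[OF assms(5)] .
    have "a n (bond q (A n) n1 y') = b n (bond q (B n) n1 y')" if y': "y' \<in> carrier (H n1)" for y'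
    proof -
      obtain h where h: "h \<in> inv_lim H q" "h m = bond q m n1 y'"
        using ml_lift[OF assms(2,5), of "bond q m n1 y'" m] y' unfolding n1_def by blast
      obtain g where g: "g \<in> inv_lim G p" "(\<lambda>n. f n (g n)) = h" using assms(4) h(1) by blast
      have gm: "g m \<in> carrier (G m)" using g(1) unfolding inv_lim_def by blast
      have hm: "bond q m n1 y' = f m (g m)" using g(2) h(2) by auto
      have "bond q (A n) n1 y' = f (A n) (bond p (A n) m (g m))"
        using bond_comp[of "A n" m n1 q y'] m(1) n1 hm level_bond[OF assms(1,3) m(1) gm] by simp
      moreover have "bond q (B n) n1 y' = f (B n) (bond p (B n) m (g m))"
        using bond_comp[of "B n" m n1 q y'] m(2) n1 hm level_bond[OF assms(1,3) m(2) gm] by simp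
      ultimately show ?thesis using m(3) gm by simp
    qed
    then show "\<exists>m\<ge>A n. m \<ge> B n \<and> (\<forall>x\<in>carrier (H m). a n (bond q (A n) m x) = b n (bond q (B n) m x))"
      using m(1,2) n1 by (intro exI[of _ n1]) auto
  qed
qed

end
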